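(* In a type-theoretic fibration category, if $f:A\to B$ and $g:B\to C$ are morphisms such that $gf$ and $g$ are acyclic cofibrations, then $f$ is an acyclic cofibration.
   Context: A type-theoretic fibration category is a category with a terminal object $1$ and a subcategory of morphisms called fibrations, containing all isomorphisms and all morphisms with codomain $1$, such that: all pullbacks of fibrations exist and are fibrations; the dependent product of a fibration along a fibration exists and is a fibration; and every morphism factors as an acyclic cofibration followed by a fibration. An acyclic cofibration is a morphism with the left lifting property with respect to all fibrations. *)

theory Defs
  imports Main
begin

text \<open>A category given by explicit data: objects, arrows, source, target,
  composition (cmp C g f means g after f) and identities.\<close>

record ('o, 'a) cat =
  obj :: "'o set"
  arr :: "'a set"
  src :: "'a \<Rightarrow> 'o"
  tgt :: "'a \<Rightarrow> 'o"
  cmp :: "'a \<Rightarrow> 'a \<Rightarrow> 'a"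
  idt :: "'o \<Rightarrow> 'a"

definition hom :: "('o, 'a, 'b) cat_scheme \<Rightarrow> 'o \<Rightarrow> 'o \<Rightarrow> 'a set" where
  "hom C X Y = {f \<in> arr C. src C f = X \<and> tgt C f = Y}"

definition category :: "('o, 'a, 'b) cat_scheme \<Rightarrow> bool" where
  "category C \<longleftrightarrow>
     (\<forall>f\<in>arr C. src C f \<in> obj C \<and> tgt C f \<in> obj C) \<and>
     (\<forall>X\<in>obj C. idt C X \<in> hom C X X) \<and>
     (\<forall>f\<in>arr C. \<forall>g\<in>arr C. tgt C f = src C g \<longrightarrow>
        cmp C g f \<in> hom C (src C f) (tgt C g)) \<and>
     (\<forall>f\<in>arr C. cmp C (idt C (tgt C f)) f = f \<and> cmp C f (idt C (src C f)) = f) \<and>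
     (\<forall>f\<in>arr C. \<forall>g\<in>arr C. \<forall>h\<in>arr C. tgt C f = src C g \<and> tgt C g = src C h \<longrightarrow>
        cmp C h (cmp C g f) = cmp C (cmp C h g) f)"

definition terminal :: "('o, 'a, 'b) cat_scheme \<Rightarrow> 'o \<Rightarrow> bool" where
  "terminal C T \<longleftrightarrow> T \<in> obj C \<and> (\<forall>X\<in>obj C. \<exists>!t. t \<in> hom C X T)"

definition iso :: "('o, 'a, 'b) cat_scheme \<Rightarrow> 'a \<Rightarrow> bool" where
  "iso C f \<longleftrightarrow> f \<in> arr C \<and>
     (\<exists>g\<in>hom C (tgt C f) (src C f).
        cmp C g f = idt C (src C f) \<and> cmp C f g = idt C (tgt C f))"

definition is_pullback ::
  "('o, 'a, 'b) cat_scheme \<Rightarrow> 'a \<Rightarrow> 'a \<Rightarrow> 'o \<Rightarrow> 'a \<Rightarrow> 'a \<Rightarrow> bool" where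
  "is_pullback C f g P p1 p2 \<longleftrightarrow>
     f \<in> arr C \<and> g \<in> arr C \<and> tgt C f = tgt C g \<and> P \<in> obj C \<and>
     p1 \<in> hom C P (src C f) \<and> p2 \<in> hom C P (src C g) \<and>
     cmp C f p1 = cmp C g p2 \<and>
     (\<forall>Q q1 q2. q1 \<in> hom C Q (src C f) \<and> q2 \<in> hom C Q (src C g) \<and>
        cmp C f q1 = cmp C g q2 \<longrightarrow>
        (\<exists>!u. u \<in> hom C Q P \<and> cmp C p1 u = q1 \<and> cmp C p2 u = q2))"

definition acyclic_cofibration :: "('o, 'a, 'b) cat_scheme \<Rightarrow> 'a set \<Rightarrow> 'a \<Rightarrow> bool" where
  "acyclic_cofibration C Fib i \<longleftrightarrow> i \<in> arr C \<and>
     (\<forall>p\<in>Fib. \<forall>u v. u \<in> hom C (src C i) (src C p) \<and> v \<in> hom C (tgt C i) (tgt C p) \<and>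
        cmp C p u = cmp C v i \<longrightarrow>
        (\<exists>l\<in>hom C (tgt C i) (src C p). cmp C l i = u \<and> cmp C p l = v))"

text \<open>Dependent product of g : A \<rightarrow> B along f : B \<rightarrow> D: an object p : \<Pi> \<rightarrow> D of the
  slice over D together with an evaluation map ev : the pullback of Pi along f \<rightarrow> A over B which is
  universal, i.e. \<Pi> is the value at g of a right adjoint to pullback along f.\<close>

definition dep_prod_fib ::
  "('o, 'a, 'b) cat_scheme \<Rightarrow> 'a set \<Rightarrow> 'a \<Rightarrow> 'a \<Rightarrow> bool" where
  "dep_prod_fib C Fib f g \<longleftrightarrow>
     (\<exists>Pi p P pi1 pi2 ev.
        p \<in> hom C Pi (tgt C f) \<and> p \<in> Fib \<and>
        is_pullback C p f P pi1 pi2 \<and>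
        ev \<in> hom C P (src C g) \<and> cmp C g ev = pi2 \<and>
        (\<forall>X h Q q1 q2 u.
           h \<in> hom C X (tgt C f) \<and> is_pullback C h f Q q1 q2 \<and>
           u \<in> hom C Q (src C g) \<and> cmp C g u = q2 \<longrightarrow>
           (\<exists>!v. v \<in> hom C X Pi \<and> cmp C p v = h \<and>
              (\<forall>w. w \<in> hom C Q P \<and> cmp C pi1 w = cmp C v q1 \<and> cmp C pi2 w = q2
                   \<longrightarrow> cmp C ev w = u))))"

definition tt_fibration_category ::
  "('o, 'a, 'b) cat_scheme \<Rightarrow> 'o \<Rightarrow> 'a set \<Rightarrow> bool" where
  "tt_fibration_category C one Fib \<longleftrightarrow>
     category C \<and> terminal C one \<and>
     \<comment> \<open>fibrations form a subcategory containing all isos and all maps into 1\<close>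
     Fib \<subseteq> arr C \<and>
     (\<forall>f\<in>Fib. \<forall>g\<in>Fib. tgt C f = src C g \<longrightarrow> cmp C g f \<in> Fib) \<and>
     (\<forall>f. iso C f \<longrightarrow> f \<in> Fib) \<and>
     (\<forall>f\<in>arr C. tgt C f = one \<longrightarrow> f \<in> Fib) \<and>
     \<comment> \<open>pullbacks of fibrations exist and are fibrations\<close>
     (\<forall>p\<in>Fib. \<forall>h\<in>arr C. tgt C h = tgt C p \<longrightarrow>
        (\<exists>P q1 q2. is_pullback C p h P q1 q2 \<and> q2 \<in> Fib)) \<and>
     \<comment> \<open>dependent products of fibrations along fibrations exist and are fibrations\<close>
     (\<forall>f\<in>Fib. \<forall>g\<in>Fib. tgt C g = src C f \<longrightarrow> dep_prod_fib C Fib f g) \<and>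
     \<comment> \<open>factorization: acyclic cofibration followed by fibration\<close>
     (\<forall>f\<in>arr C. \<exists>i p. acyclic_cofibration C Fib i \<and> p \<in> Fib \<and>
        tgt C i = src C p \<and> cmp C p i = f)"

end

theory Submission
  imports Defs
begin

theorem lemma7p3:
  fixes C :: "('o, 'a, 'b) cat_scheme" and one :: 'o and Fib :: "'a set"
    and f g :: 'a and A B D :: 'o
  assumes "tt_fibration_category C one Fib"
    and "f \<in> hom C A B" and "g \<in> hom C B D"
    and "acyclic_cofibration C Fib (cmp C g f)"
    and "acyclic_cofibration C Fib g"
  shows "acyclic_cofibration C Fib f"
proof -
  have cat: "category C" and trm: "terminal C one"
    and fibone: "\<forall>f\<in>arr C. tgt C f = one \<longrightarrow> f \<in> Fib"
    using assms(1) unfolding tt_fibration_category_def by auto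
  have f: "f \<in> arr C" "src C f = A" "tgt C f = B" using assms(2) by (auto simp: hom_def)
  have g: "g \<in> arr C" "src C g = B" "tgt C g = D" using assms(3) by (auto simp: hom_def)
  have objs: "A \<in> obj C" "B \<in> obj C" "D \<in> obj C"
    using cat f g unfolding category_def by metis+
  have comp: "\<And>x y. x \<in> arr C \<Longrightarrow> y \<in> arr C \<Longrightarrow> tgt C x = src C y \<Longrightarrow>
      cmp C y x \<in> hom C (src C x) (tgt C y)"
    using cat unfolding category_def by blast
  have idr: "\<And>x. x \<in> arr C \<Longrightarrow> cmp C x (idt C (src C x)) = x"
    and idl: "\<And>x. x \<in> arr C \<Longrightarrow> cmp C (idt C (tgt C x)) x = x"
    using cat unfolding category_def by blast+
  have idh: "\<And>X. X \<in> obj C \<Longrightarrow> idt C X \<in> hom C X X"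
    using cat unfolding category_def by blast
  have assoc: "\<And>x y z. x \<in> arr C \<Longrightarrow> y \<in> arr C \<Longrightarrow> z \<in> arr C \<Longrightarrow>
      tgt C x = src C y \<Longrightarrow> tgt C y = src C z \<Longrightarrow> cmp C z (cmp C y x) = cmp C (cmp C z y) x"
    using cat unfolding category_def by blast
  obtain tB where tB: "tB \<in> hom C B one" using trm objs unfolding terminal_def by blast
  obtain tD where tD: "tD \<in> hom C D one" using trm objs unfolding terminal_def by blast
  have uniq: "\<And>x y. x \<in> hom C B one \<Longrightarrow> y \<in> hom C B one \<Longrightarrow> x = y"
    using trm objs unfolding terminal_def by blast
  have tBF: "tB \<in> Fib" using tB fibone by (auto simp: hom_def)
  have iB: "idt C B \<in> hom C B B" using idh objs by blast
  have tDg: "cmp C tD g \<in> hom C B one" using comp[of g tD] tD g by (auto simp: hom_def)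
  have "cmp C tB (idt C B) = tB" using idr[of tB] tB by (auto simp: hom_def)
  hence sq: "cmp C tB (idt C B) = cmp C tD g" using uniq[OF tB tDg] by simp
  obtain r where r: "r \<in> hom C D B" "cmp C r g = idt C B"
    using assms(5) tBF iB tD sq g tB unfolding acyclic_cofibration_def hom_def by force
  show ?thesis unfolding acyclic_cofibration_def
  proof (intro conjI ballI allI impI)
    show "f \<in> arr C" by (rule f)
  next
    fix p u v
    assume p: "p \<in> Fib" and H: "u \<in> hom C (src C f) (src C p) \<and> v \<in> hom C (tgt C f) (tgt C p) \<and>
        cmp C p u = cmp C v f"
    have u: "u \<in> hom C A (src C p)" and v: "v \<in> hom C B (tgt C p)" and e: "cmp C p u = cmp C v f"
      using H f by auto
    have gf: "cmp C g f \<in> hom C A D" using comp[of f g] f g by auto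
    have vr: "cmp C v r \<in> hom C D (tgt C p)" using comp[of r v] r v by (auto simp: hom_def)
    have rgf: "cmp C r (cmp C g f) = f"
      using assoc[of f g r] f g r idl[of f] by (auto simp: hom_def)
    have "cmp C (cmp C v r) (cmp C g f) = cmp C v (cmp C r (cmp C g f))"
      using assoc[of "cmp C g f" r v] gf r v by (auto simp: hom_def)
    hence sq2: "cmp C p u = cmp C (cmp C v r) (cmp C g f)" using rgf e by simp
    obtain l where l: "l \<in> hom C D (src C p)" "cmp C l (cmp C g f) = u" "cmp C p l = cmp C v r"
      using assms(4) p u vr sq2 gf unfolding acyclic_cofibration_def hom_def by force
    have pF: "p \<in> arr C" using p assms(1) unfolding tt_fibration_category_def by auto
    show "\<exists>l'\<in>hom C (tgt C f) (src C p). cmp C l' f = u \<and> cmp C p l' = v"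
    proof (intro bexI conjI)
      show "cmp C l g \<in> hom C (tgt C f) (src C p)" using comp[of g l] g l f by (auto simp: hom_def)
      show "cmp C (cmp C l g) f = u" using assoc[of f g l] f g l by (auto simp: hom_def)
      have "cmp C p (cmp C l g) = cmp C (cmp C p l) g"
        using assoc[of g l p] g l pF by (auto simp: hom_def)
      also have "\<dots> = cmp C (cmp C v r) g" using l by simp
      also have "\<dots> = cmp C v (cmp C r g)" using assoc[of g r v] g r v by (auto simp: hom_def)
      also have "\<dots> = v" using r idr[of v] v by (auto simp: hom_def)
      finally show "cmp C p (cmp C l g) = v" .
    qed
  qed
qed

end
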